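(* The subsumption relation $\sqsubseteq$ on models over a fixed signature ($M\sqsubseteq M'$ iff there is a homomorphism $M\to M'$) is reflexive and transitive, and it is antisymmetric up to isomorphism: if $M\sqsubseteq M'$ and $M'\sqsubseteq M$ then $M$ and $M'$ are isomorphic. Hence $\sqsubseteq$ induces a partial order on isomorphism classes of models.
   Context: Signature: finite set of types $\mathsf{TYPE}$, finite set of attributes $\mathsf{ATTR}$, relation symbols $\mathsf{REL}=\bigcup_{m>1}\mathsf{REL}_m$, a set $\mathsf{NNAME}$ of base-labels, a set $\mathsf{NVAR}$ of node variables and a set $\mathsf{WVAR}$ of wrapping variables (pairwise disjoint); node labels are $\mathsf{NLABEL}=\mathsf{NNAME}\uplus\mathsf{NVAR}$. A Feature Structure with Wrappings (FSW) is $F=\langle V,\mathcal W,\mathcal I\rangle$ where $V$ is a nonempty set of nodes, $\mathcal W$ is a set of pairwise disjoint nonempty subsets of $V$ (the wrappings, with $\mathcal W\cap V=\emptyset$), and $\mathcal I$ maps each type $t$ to a subset $\mathcal I(t)\subseteq V$, each attribute $\mathsf P$ to a partial function $\mathcal I(\mathsf P)$ from $V$ to $V\cup\mathcal W$, each $m$-ary relation symbol $r$ to a subset of $(V\cup\mathcal W)^m$, and is a partial map from $\mathsf{NNAME}$ to $V$. The w-sets are the elements of $\hat{\mathcal W}=\mathcal W\cup\{V\setminus\bigcup\mathcal W\}$, a partition of $V$; $[v]$ denotes the w-set containing $v$. A model is $M=\langle F,g\rangle$ with $g=\langle g_N,g_W\rangle$, $g_N:\mathsf{NVAR}\rightharpoonup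 V$, $g_W:\mathsf{WVAR}\rightharpoonup\mathcal W$. Write $\mathcal I_g(b)=\mathcal I(b)$ for base-labels, $\mathcal I_g(x)=g_N(x)$, $\mathcal I_g(T)=g_W(T)$, and $\mathcal I_g(k,\varepsilon)=\mathcal I_g(k)$, $\mathcal I_g(k,p\mathsf Q)=\mathcal I(\mathsf Q)(\mathcal I_g(k,p))$ for attribute words $p\in\mathsf{ATTR}^*$ (partial). Models are required to satisfy: (reachability) for every $v\in V$ there are $k\in\mathsf{NLABEL}$ and $p\in\mathsf{ATTR}^*$ with $\mathcal I_g(k)\in[v]$ and $\mathcal I_g(k,p)=v$; (non-escapability) for every $W\in\mathcal W$, $v\in W$ and $p\in\mathsf{ATTR}^*$, if $\mathcal I(p)(v)$ is defined then it lies in $[v]$. A homomorphism $h:M\to M'$ is a pair $h_V:V\to V'\uplus\mathcal W'$, $h_{\mathcal W}:\mathcal W\to\mathcal W'$ such that, writing $h$ for both (and extending it to $V\cup\mathcal W$): $h(\mathcal I(t))\subseteq\mathcal I'(t)$ for all types; if $\mathcal I(\mathsf P)(v)$ is defined then $\mathcal I'(\mathsf P)(h(v))$ is defined and equals $h(\mathcal I(\mathsf P)(v))$; $h(\mathcal I(r))\subseteq\mathcal I'(r)$ for all relations; if $\mathcal I(b)$ is defined then $h(\mathcal I(b))=\mathcal I'(b)$; if $v\in W\in\mathcal W$ then $h_V(v)\in h_{\mathcal W}(W)$; if $g(x)$ is defined (for $x\in\mathsf{NVAR}\uplus\mathsf{WVAR}$) then $h(g(x))=g'(x)$. An isomorphism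 $\sigma:M\to M'$ is a homomorphism with $\sigma_V(V)\subseteq V'$, such that $\sigma_V:V\to V'$ and $\sigma_{\mathcal W}:\mathcal W\to\mathcal W'$ are bijections and $\sigma^{-1}=\langle\sigma_V^{-1},\sigma_{\mathcal W}^{-1}\rangle$ is a homomorphism $M'\to M$. *)

theory Defs
  imports Main
begin

text \<open>Signature: types 't, attributes 'a, relation symbols 'r (with arity function),
  base-labels 'b, node variables 'x, wrapping variables 'w (distinct HOL types, hence
  pairwise disjoint).\<close>

text \<open>Elements of V \<union> W (disjoint union, so W \<inter> V = {} automatically).\<close>
datatype 'v elem = Node 'v | Wrap "'v set"

datatype ('b, 'x) nlabel = Base 'b | NVar 'x

text \<open>A model: an FSW together with a variable assignment g = (g_N, g_W).\<close>
record ('t, 'a, 'r, 'b, 'x, 'w, 'v) model =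
  nodes :: "'v set"
  wraps :: "'v set set"
  Ityp  :: "'t \<Rightarrow> 'v set"
  Iattr :: "'a \<Rightarrow> 'v \<Rightarrow> 'v elem option"
  Irel  :: "'r \<Rightarrow> 'v elem list set"
  Ibase :: "'b \<Rightarrow> 'v option"
  gN    :: "'x \<Rightarrow> 'v option"
  gW    :: "'w \<Rightarrow> 'v set option"

definition elems :: "('t, 'a, 'r, 'b, 'x, 'w, 'v) model \<Rightarrow> 'v elem set" where
  "elems M = Node ` nodes M \<union> Wrap ` wraps M"

definition wset :: "('t, 'a, 'r, 'b, 'x, 'w, 'v) model \<Rightarrow> 'v \<Rightarrow> 'v set" where
  "wset M v = (if \<exists>W\<in>wraps M. v \<in> W then (THE W. W \<in> wraps M \<and> v \<in> W)
               else nodes M - \<Union>(wraps M))"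

fun astep :: "('t, 'a, 'r, 'b, 'x, 'w, 'v) model \<Rightarrow> 'v elem option \<Rightarrow> 'a \<Rightarrow> 'v elem option" where
  "astep M (Some (Node u)) Q = Iattr M Q u"
| "astep M _ Q = None"

text \<open>I(p)(e) for an attribute word p (left to right: I(pQ) = I(Q) \<circ> I(p)).\<close>
definition path_from :: "('t, 'a, 'r, 'b, 'x, 'w, 'v) model \<Rightarrow> 'v elem option \<Rightarrow> 'a list \<Rightarrow> 'v elem option" where
  "path_from M e p = foldl (astep M) e p"

fun lbl_val :: "('t, 'a, 'r, 'b, 'x, 'w, 'v) model \<Rightarrow> ('b, 'x) nlabel \<Rightarrow> 'v option" where
  "lbl_val M (Base b) = Ibase M b"
| "lbl_val M (NVar x) = gN M x"

definition lbl_path :: "('t, 'a, 'r, 'b, 'x, 'w, 'v) model \<Rightarrow> ('b, 'x) nlabel \<Rightarrow> 'a list \<Rightarrow> 'v elem option" where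
  "lbl_path M k p = path_from M (map_option Node (lbl_val M k)) p"

definition is_model :: "('r \<Rightarrow> nat) \<Rightarrow> ('t, 'a, 'r, 'b, 'x, 'w, 'v) model \<Rightarrow> bool" where
  "is_model arity M \<longleftrightarrow>
     \<comment> \<open>FSW conditions\<close>
     nodes M \<noteq> {}
   \<and> (\<forall>W\<in>wraps M. W \<noteq> {} \<and> W \<subseteq> nodes M)
   \<and> (\<forall>W1\<in>wraps M. \<forall>W2\<in>wraps M. W1 \<noteq> W2 \<longrightarrow> W1 \<inter> W2 = {})
   \<and> (\<forall>t. Ityp M t \<subseteq> nodes M)
   \<and> (\<forall>P v e. Iattr M P v = Some e \<longrightarrow> v \<in> nodes M \<and> e \<in> elems M)
   \<and> (\<forall>r. Irel M r \<subseteq> {xs. length xs = arity r \<and> set xs \<subseteq> elems M})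
   \<and> (\<forall>b v. Ibase M b = Some v \<longrightarrow> v \<in> nodes M)
     \<comment> \<open>assignment\<close>
   \<and> (\<forall>x v. gN M x = Some v \<longrightarrow> v \<in> nodes M)
   \<and> (\<forall>T W. gW M T = Some W \<longrightarrow> W \<in> wraps M)
     \<comment> \<open>reachability\<close>
   \<and> (\<forall>v\<in>nodes M. \<exists>k p u. lbl_val M k = Some u \<and> u \<in> wset M v
                          \<and> lbl_path M k p = Some (Node v))
     \<comment> \<open>non-escapability\<close>
   \<and> (\<forall>W\<in>wraps M. \<forall>v\<in>W. \<forall>p e. path_from M (Some (Node v)) p = Some e
                          \<longrightarrow> (\<exists>u. e = Node u \<and> u \<in> wset M v))"

fun hext :: "('v \<Rightarrow> 'u elem) \<Rightarrow> ('v set \<Rightarrow> 'u set) \<Rightarrow> 'v elem \<Rightarrow> 'u elem" where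
  "hext hV hW (Node v) = hV v"
| "hext hV hW (Wrap W) = Wrap (hW W)"

definition is_hom ::
  "('t, 'a, 'r, 'b, 'x, 'w, 'v) model \<Rightarrow> ('t, 'a, 'r, 'b, 'x, 'w, 'u) model
   \<Rightarrow> ('v \<Rightarrow> 'u elem) \<Rightarrow> ('v set \<Rightarrow> 'u set) \<Rightarrow> bool" where
  "is_hom M M' hV hW \<longleftrightarrow>
     (\<forall>v\<in>nodes M. hV v \<in> elems M')
   \<and> (\<forall>W\<in>wraps M. hW W \<in> wraps M')
   \<and> (\<forall>t. \<forall>v\<in>Ityp M t. hV v \<in> Node ` Ityp M' t)
   \<and> (\<forall>P v e. Iattr M P v = Some e \<longrightarrow> astep M' (Some (hV v)) P = Some (hext hV hW e))
   \<and> (\<forall>r. \<forall>xs\<in>Irel M r. map (hext hV hW) xs \<in> Irel M' r)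
   \<and> (\<forall>b v. Ibase M b = Some v \<longrightarrow> map_option Node (Ibase M' b) = Some (hV v))
   \<and> (\<forall>W\<in>wraps M. \<forall>v\<in>W. hV v \<in> Node ` hW W)
   \<and> (\<forall>x v. gN M x = Some v \<longrightarrow> map_option Node (gN M' x) = Some (hV v))
   \<and> (\<forall>T W. gW M T = Some W \<longrightarrow> gW M' T = Some (hW W))"

definition subsumes ::
  "('t, 'a, 'r, 'b, 'x, 'w, 'v) model \<Rightarrow> ('t, 'a, 'r, 'b, 'x, 'w, 'u) model \<Rightarrow> bool" where
  "subsumes M M' \<longleftrightarrow> (\<exists>hV hW. is_hom M M' hV hW)"

text \<open>Isomorphism: a homomorphism whose node part maps V into V' (hence written
  Node \<circ> \<sigma>), bijective on nodes and on wrappings, with homomorphic inverse.\<close>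
definition is_iso ::
  "('t, 'a, 'r, 'b, 'x, 'w, 'v) model \<Rightarrow> ('t, 'a, 'r, 'b, 'x, 'w, 'u) model \<Rightarrow> bool" where
  "is_iso M M' \<longleftrightarrow> (\<exists>(\<sigma>V :: 'v \<Rightarrow> 'u) (\<sigma>W :: 'v set \<Rightarrow> 'u set).
       is_hom M M' (Node \<circ> \<sigma>V) \<sigma>W
     \<and> bij_betw \<sigma>V (nodes M) (nodes M')
     \<and> bij_betw \<sigma>W (wraps M) (wraps M')
     \<and> is_hom M' M (Node \<circ> inv_into (nodes M) \<sigma>V) (inv_into (wraps M) \<sigma>W))"

end

theory Submission
  imports Defs
begin

lemma hext_id: "hext Node id e = e" by (cases e) auto

lemma hext_id': "hext Node id = (\<lambda>e. e)" by (rule ext) (rule hext_id)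

lemma hom_refl: "is_model ar M \<Longrightarrow> is_hom M M Node id"
  unfolding is_hom_def is_model_def elems_def
  by (auto simp: hext_id hext_id')

lemma hext_comp: "hext (\<lambda>v. hext h'V h'W (hV v)) (h'W \<circ> hW) e = hext h'V h'W (hext hV hW e)"
  by (cases e) auto

lemma hext_elems: "is_hom M M' hV hW \<Longrightarrow> e \<in> elems M \<Longrightarrow> hext hV hW e \<in> elems M'"
  unfolding is_hom_def elems_def by auto

lemma hom_attr: "is_hom M M' hV hW \<Longrightarrow> Iattr M P v = Some e \<Longrightarrow> astep M' (Some (hV v)) P = Some (hext hV hW e)"
  unfolding is_hom_def by (elim conjE) simp

lemma hom_base: "is_hom M M' hV hW \<Longrightarrow> Ibase M b = Some v \<Longrightarrow> map_option Node (Ibase M' b) = Some (hV v)"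
  unfolding is_hom_def by (elim conjE) simp

lemma hom_gN: "is_hom M M' hV hW \<Longrightarrow> gN M x = Some v \<Longrightarrow> map_option Node (gN M' x) = Some (hV v)"
  unfolding is_hom_def by (elim conjE) simp

lemma hom_el: "is_hom M M' hV hW \<Longrightarrow> v \<in> nodes M \<Longrightarrow> hV v \<in> elems M'"
  unfolding is_hom_def by (elim conjE) simp

lemma hom_wr: "is_hom M M' hV hW \<Longrightarrow> W \<in> wraps M \<Longrightarrow> hW W \<in> wraps M'"
  unfolding is_hom_def by (elim conjE) simp

lemma hom_typ: "is_hom M M' hV hW \<Longrightarrow> v \<in> Ityp M t \<Longrightarrow> hV v \<in> Node ` Ityp M' t"
  unfolding is_hom_def by (elim conjE) simp

lemma hom_rel: "is_hom M M' hV hW \<Longrightarrow> xs \<in> Irel M r \<Longrightarrow> map (hext hV hW) xs \<in> Irel M' r"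
  unfolding is_hom_def by (elim conjE) simp

lemma hom_mem: "is_hom M M' hV hW \<Longrightarrow> W \<in> wraps M \<Longrightarrow> v \<in> W \<Longrightarrow> hV v \<in> Node ` hW W"
  unfolding is_hom_def by (elim conjE) simp

lemma hom_gW: "is_hom M M' hV hW \<Longrightarrow> gW M T = Some W \<Longrightarrow> gW M' T = Some (hW W)"
  unfolding is_hom_def by (elim conjE) simp

lemma hom_comp:
  assumes h: "is_hom M M' hV hW" and h': "is_hom M' M'' h'V h'W"
  shows "is_hom M M'' (\<lambda>v. hext h'V h'W (hV v)) (h'W \<circ> hW)"
  unfolding is_hom_def
proof (intro conjI allI ballI impI)
  fix v assume "v \<in> nodes M"
  then have "hV v \<in> elems M'" by (rule hom_el[OF h])
  then show "hext h'V h'W (hV v) \<in> elems M''" by (rule hext_elems[OF h'])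
next
  fix W assume "W \<in> wraps M" then show "(h'W \<circ> hW) W \<in> wraps M''"
    using hom_wr[OF h] hom_wr[OF h'] by simp
next
  fix t v assume "v \<in> Ityp M t"
  then obtain u where "hV v = Node u" "u \<in> Ityp M' t" using hom_typ[OF h] by blast
  then show "hext h'V h'W (hV v) \<in> Node ` Ityp M'' t" using hom_typ[OF h'] by simp
next
  fix P v e assume a: "Iattr M P v = Some e"
  then have "astep M' (Some (hV v)) P = Some (hext hV hW e)" by (rule hom_attr[OF h])
  then obtain u where u: "hV v = Node u" "Iattr M' P u = Some (hext hV hW e)"
    by (cases "hV v") auto
  then have "astep M'' (Some (h'V u)) P = Some (hext h'V h'W (hext hV hW e))" using hom_attr[OF h'] by blast
  then show "astep M'' (Some (hext h'V h'W (hV v))) P = Some (hext (\<lambda>v. hext h'V h'W (hV v)) (h'W \<circ> hW) e)"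
    using u by (simp add: hext_comp)
next
  fix r xs assume "xs \<in> Irel M r"
  then have "map (hext hV hW) xs \<in> Irel M' r" by (rule hom_rel[OF h])
  then have "map (hext h'V h'W) (map (hext hV hW) xs) \<in> Irel M'' r" by (rule hom_rel[OF h'])
  moreover have eq: "map (hext (\<lambda>v. hext h'V h'W (hV v)) (h'W \<circ> hW)) xs = map (hext h'V h'W) (map (hext hV hW) xs)"
    by (simp add: hext_comp)
  ultimately show "map (hext (\<lambda>v. hext h'V h'W (hV v)) (h'W \<circ> hW)) xs \<in> Irel M'' r" by (simp only: eq)
next
  fix b v assume "Ibase M b = Some v"
  then have "map_option Node (Ibase M' b) = Some (hV v)" by (rule hom_base[OF h])
  then obtain u where u: "Ibase M' b = Some u" "hV v = Node u" by auto
  then show "map_option Node (Ibase M'' b) = Some (hext h'V h'W (hV v))" using hom_base[OF h'] by simp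
next
  fix W v assume a: "W \<in> wraps M" "v \<in> W"
  then obtain u where u: "hV v = Node u" "u \<in> hW W" using hom_mem[OF h] by blast
  have "hW W \<in> wraps M'" using a hom_wr[OF h] by simp
  then show "hext h'V h'W (hV v) \<in> Node ` (h'W \<circ> hW) W" using u hom_mem[OF h'] by simp
next
  fix x v assume "gN M x = Some v"
  then have "map_option Node (gN M' x) = Some (hV v)" by (rule hom_gN[OF h])
  then obtain u where u: "gN M' x = Some u" "hV v = Node u" by auto
  then show "map_option Node (gN M'' x) = Some (hext h'V h'W (hV v))" using hom_gN[OF h'] by simp
next
  fix T W assume "gW M T = Some W"
  then show "gW M'' T = Some ((h'W \<circ> hW) W)" using hom_gW[OF h] hom_gW[OF h'] by simp
qed

lemma path_None: "path_from M None p = None"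
  unfolding path_from_def by (induct p) auto

lemma hom_path:
  assumes h: "is_hom M M' hV hW"
  shows "path_from M (Some e0) p = Some e \<Longrightarrow> path_from M' (Some (hext hV hW e0)) p = Some (hext hV hW e)"
proof (induct p arbitrary: e0)
  case Nil then show ?case by (simp add: path_from_def)
next
  case (Cons Q p)
  show ?case
  proof (cases e0)
    case (Node u)
    show ?thesis
    proof (cases "Iattr M Q u")
      case None then show ?thesis using Cons.prems Node
        by (simp add: path_from_def path_None[unfolded path_from_def])
    next
      case (Some e1)
      then have "astep M' (Some (hV u)) Q = Some (hext hV hW e1)" using hom_attr[OF h] by blast
      moreover have "path_from M (Some e1) p = Some e" using Cons.prems Node Some by (simp add: path_from_def)
      ultimately show ?thesis using Cons.hyps Node by (simp add: path_from_def)
    qed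
  next
    case (Wrap W) then show ?thesis using Cons.prems
      by (simp add: path_from_def path_None[unfolded path_from_def])
  qed
qed

lemma hom_lbl:
  assumes h: "is_hom M M' hV hW" and "lbl_val M k = Some u"
  shows "map_option Node (lbl_val M' k) = Some (hV u)"
  using assms hom_base hom_gN by (cases k) auto

lemma mod_all: "is_model ar M \<Longrightarrow>
     nodes M \<noteq> {}
   \<and> (\<forall>W\<in>wraps M. W \<noteq> {} \<and> W \<subseteq> nodes M)
   \<and> (\<forall>W1\<in>wraps M. \<forall>W2\<in>wraps M. W1 \<noteq> W2 \<longrightarrow> W1 \<inter> W2 = {})
   \<and> (\<forall>t. Ityp M t \<subseteq> nodes M)
   \<and> (\<forall>P v e. Iattr M P v = Some e \<longrightarrow> v \<in> nodes M \<and> e \<in> elems M)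
   \<and> (\<forall>r. Irel M r \<subseteq> {xs. length xs = ar r \<and> set xs \<subseteq> elems M})
   \<and> (\<forall>b v. Ibase M b = Some v \<longrightarrow> v \<in> nodes M)
   \<and> (\<forall>x v. gN M x = Some v \<longrightarrow> v \<in> nodes M)
   \<and> (\<forall>T W. gW M T = Some W \<longrightarrow> W \<in> wraps M)
   \<and> (\<forall>v\<in>nodes M. \<exists>k p u. lbl_val M k = Some u \<and> u \<in> wset M v
                          \<and> lbl_path M k p = Some (Node v))"
  unfolding is_model_def by (elim conjE) (intro conjI; assumption)

lemma mod_reach: "is_model ar M \<Longrightarrow> v \<in> nodes M \<Longrightarrow> \<exists>k p u. lbl_val M k = Some u \<and> u \<in> wset M v \<and> lbl_path M k p = Some (Node v)"
  by (drule mod_all) (elim conjE, drule bspec, assumption, assumption)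

lemma mod_wr: "is_model ar M \<Longrightarrow> W \<in> wraps M \<Longrightarrow> W \<noteq> {} \<and> W \<subseteq> nodes M"
  by (drule mod_all) (elim conjE, drule bspec, assumption, assumption)

lemma mod_disj0: "is_model ar M \<Longrightarrow> \<forall>W1\<in>wraps M. \<forall>W2\<in>wraps M. W1 \<noteq> W2 \<longrightarrow> W1 \<inter> W2 = {}"
  unfolding is_model_def by (elim conjE) assumption

lemma mod_disj: "is_model ar M \<Longrightarrow> W1 \<in> wraps M \<Longrightarrow> W2 \<in> wraps M \<Longrightarrow> W1 \<noteq> W2 \<Longrightarrow> W1 \<inter> W2 = {}"
  using mod_disj0[of ar M] by blast

lemma mod_typ0: "is_model ar M \<Longrightarrow> \<forall>t. Ityp M t \<subseteq> nodes M"
  unfolding is_model_def by (elim conjE) assumption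

lemma mod_typ: "is_model ar M \<Longrightarrow> Ityp M t \<subseteq> nodes M"
  using mod_typ0[of ar M] by blast

lemma mod_attr0: "is_model ar M \<Longrightarrow> \<forall>P v e. Iattr M P v = Some e \<longrightarrow> v \<in> nodes M \<and> e \<in> elems M"
  unfolding is_model_def by (elim conjE) assumption

lemma mod_attr: "is_model ar M \<Longrightarrow> Iattr M P v = Some e \<Longrightarrow> v \<in> nodes M \<and> e \<in> elems M"
  using mod_attr0[of ar M] by blast

lemma mod_rel0: "is_model ar M \<Longrightarrow> \<forall>r. Irel M r \<subseteq> {xs. length xs = ar r \<and> set xs \<subseteq> elems M}"
  unfolding is_model_def by (elim conjE) assumption

lemma mod_rel: "is_model ar M \<Longrightarrow> xs \<in> Irel M r \<Longrightarrow> set xs \<subseteq> elems M"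
  using mod_rel0[of ar M] by blast

lemma mod_base0: "is_model ar M \<Longrightarrow> \<forall>b v. Ibase M b = Some v \<longrightarrow> v \<in> nodes M"
  unfolding is_model_def by (elim conjE) assumption

lemma mod_base: "is_model ar M \<Longrightarrow> Ibase M b = Some v \<Longrightarrow> v \<in> nodes M"
  using mod_base0[of ar M] by blast

lemma mod_gN0: "is_model ar M \<Longrightarrow> \<forall>x v. gN M x = Some v \<longrightarrow> v \<in> nodes M"
  unfolding is_model_def by (elim conjE) assumption

lemma mod_gN: "is_model ar M \<Longrightarrow> gN M x = Some v \<Longrightarrow> v \<in> nodes M"
  using mod_gN0[of ar M] by blast

lemma mod_gW0: "is_model ar M \<Longrightarrow> \<forall>T W. gW M T = Some W \<longrightarrow> W \<in> wraps M"
  unfolding is_model_def by (elim conjE) assumption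

lemma mod_gW: "is_model ar M \<Longrightarrow> gW M T = Some W \<Longrightarrow> W \<in> wraps M"
  using mod_gW0[of ar M] by blast

lemma endo_id_nodes:
  assumes m: "is_model ar M" and h: "is_hom M M cV cW" and v: "v \<in> nodes M"
  shows "cV v = Node v"
proof -
  obtain k p u where k: "lbl_val M k = Some u" "lbl_path M k p = Some (Node v)"
    using mod_reach[OF m v] by blast
  have "map_option Node (lbl_val M k) = Some (cV u)" using hom_lbl[OF h k(1)] .
  then have cu: "cV u = Node u" using k(1) by simp
  have "path_from M (Some (Node u)) p = Some (Node v)" using k unfolding lbl_path_def by simp
  from hom_path[OF h this] have "path_from M (Some (cV u)) p = Some (cV v)" by simp
  then show ?thesis using cu k unfolding lbl_path_def by simp
qed

lemma endo_id_wraps: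
  assumes m: "is_model ar M" and h: "is_hom M M cV cW" and W: "W \<in> wraps M"
  shows "cW W = W"
proof -
  have M: "W \<noteq> {}" "W \<subseteq> nodes M" using mod_wr[OF m W] by auto
  obtain v where v: "v \<in> W" using M by auto
  have "cV v = Node v" using endo_id_nodes[OF m h] v M by auto
  moreover have "cV v \<in> Node ` cW W" using hom_mem[OF h W v] .
  moreover have cw: "cW W \<in> wraps M" using hom_wr[OF h W] .
  ultimately have "v \<in> cW W" by auto
  then show ?thesis using mod_disj[OF m W cw] v by blast
qed

lemma hom_cong:
  assumes m: "is_model ar M" and h: "is_hom M M' hV hW"
    and eV: "\<forall>v\<in>nodes M. hV v = hV2 v" and eW: "\<forall>W\<in>wraps M. hW W = hW2 W"
  shows "is_hom M M' hV2 hW2"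
proof -
  have ex: "\<And>e. e \<in> elems M \<Longrightarrow> hext hV hW e = hext hV2 hW2 e"
    using eV eW unfolding elems_def by auto
  show ?thesis unfolding is_hom_def
  proof (intro conjI allI ballI impI)
    fix v assume "v \<in> nodes M" then show "hV2 v \<in> elems M'" using hom_el[OF h] eV by auto
  next
    fix W assume "W \<in> wraps M" then show "hW2 W \<in> wraps M'" using hom_wr[OF h] eW by auto
  next
    fix t v assume a: "v \<in> Ityp M t"
    then have "v \<in> nodes M" using mod_typ[OF m] by blast
    then show "hV2 v \<in> Node ` Ityp M' t" using hom_typ[OF h a] eV by simp
  next
    fix P v e assume a: "Iattr M P v = Some e"
    then have "v \<in> nodes M" "e \<in> elems M" using mod_attr[OF m] by blast+
    then show "astep M' (Some (hV2 v)) P = Some (hext hV2 hW2 e)" using hom_attr[OF h a] eV ex by simp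
  next
    fix r xs assume a: "xs \<in> Irel M r"
    then have "set xs \<subseteq> elems M" using mod_rel[OF m] by blast
    then have eq: "map (hext hV hW) xs = map (hext hV2 hW2) xs" using ex by (auto intro: map_cong)
    show "map (hext hV2 hW2) xs \<in> Irel M' r" using hom_rel[OF h a] unfolding eq .
  next
    fix b v assume a: "Ibase M b = Some v" then have "v \<in> nodes M" using mod_base[OF m] by blast
    then show "map_option Node (Ibase M' b) = Some (hV2 v)" using hom_base[OF h a] eV by simp
  next
    fix W v assume a: "W \<in> wraps M" "v \<in> W"
    then have "v \<in> nodes M" using mod_wr[OF m a(1)] by blast
    then show "hV2 v \<in> Node ` hW2 W" using hom_mem[OF h a] eV eW a by simp
  next
    fix x v assume a: "gN M x = Some v" then have "v \<in> nodes M" using mod_gN[OF m] by blast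
    then show "map_option Node (gN M' x) = Some (hV2 v)" using hom_gN[OF h a] eV by simp
  next
    fix T W assume a: "gW M T = Some W" then have "W \<in> wraps M" using mod_gW[OF m] by blast
    then show "gW M' T = Some (hW2 W)" using hom_gW[OF h a] eW by simp
  qed
qed

definition unnode :: "'v elem \<Rightarrow> 'v" where "unnode e = (case e of Node u \<Rightarrow> u | Wrap _ \<Rightarrow> undefined)"

lemma antisym_iso:
  assumes m1: "is_model ar M1" and m2: "is_model ar M2"
    and h: "is_hom M1 M2 hV hW" and h': "is_hom M2 M1 kV kW"
  shows "is_iso M1 M2"
proof -
  have c1: "is_hom M1 M1 (\<lambda>v. hext kV kW (hV v)) (kW \<circ> hW)" by (rule hom_comp[OF h h'])
  have c2: "is_hom M2 M2 (\<lambda>v. hext hV hW (kV v)) (hW \<circ> kW)" by (rule hom_comp[OF h' h])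
  define s where "s = unnode \<circ> hV"
  define t where "t = unnode \<circ> kV"
  have hn: "\<And>v. v \<in> nodes M1 \<Longrightarrow> hV v = Node (s v) \<and> s v \<in> nodes M2 \<and> t (s v) = v \<and> kV (s v) = Node v"
  proof -
    fix v assume v: "v \<in> nodes M1"
    have e: "hext kV kW (hV v) = Node v" using endo_id_nodes[OF m1 c1 v] .
    have "hV v \<in> elems M2" using hom_el[OF h v] .
    then obtain u where u: "hV v = Node u" "u \<in> nodes M2" using e unfolding elems_def by auto
    then show "hV v = Node (s v) \<and> s v \<in> nodes M2 \<and> t (s v) = v \<and> kV (s v) = Node v"
      using e by (simp add: s_def t_def unnode_def)
  qed
  have kn: "\<And>v. v \<in> nodes M2 \<Longrightarrow> kV v = Node (t v) \<and> t v \<in> nodes M1 \<and> s (t v) = v \<and> hV (t v) = Node v"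
  proof -
    fix v assume v: "v \<in> nodes M2"
    have e: "hext hV hW (kV v) = Node v" using endo_id_nodes[OF m2 c2 v] .
    have "kV v \<in> elems M1" using hom_el[OF h' v] .
    then obtain u where u: "kV v = Node u" "u \<in> nodes M1" using e unfolding elems_def by auto
    then show "kV v = Node (t v) \<and> t v \<in> nodes M1 \<and> s (t v) = v \<and> hV (t v) = Node v"
      using e by (simp add: s_def t_def unnode_def)
  qed
  have hw: "\<And>W. W \<in> wraps M1 \<Longrightarrow> hW W \<in> wraps M2 \<and> kW (hW W) = W"
    using endo_id_wraps[OF m1 c1] hom_wr[OF h] by auto
  have kw: "\<And>W. W \<in> wraps M2 \<Longrightarrow> kW W \<in> wraps M1 \<and> hW (kW W) = W"
    using endo_id_wraps[OF m2 c2] hom_wr[OF h'] by auto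
  have bs: "bij_betw s (nodes M1) (nodes M2)"
    by (rule bij_betw_byWitness[where f'=t]) (use hn kn in auto)
  have bw: "bij_betw hW (wraps M1) (wraps M2)"
    by (rule bij_betw_byWitness[where f'=kW]) (use hw kw in auto)
  have H1: "is_hom M1 M2 (Node \<circ> s) hW"
    by (rule hom_cong[OF m1 h]) (use hn in auto)
  have H2: "is_hom M2 M1 (Node \<circ> inv_into (nodes M1) s) (inv_into (wraps M1) hW)"
  proof (rule hom_cong[OF m2 h'])
    show "\<forall>v\<in>nodes M2. kV v = (Node \<circ> inv_into (nodes M1) s) v"
    proof
      fix v assume v: "v \<in> nodes M2"
      have "inv_into (nodes M1) s v = t v"
        by (rule inv_into_f_eq) (use bs kn v in \<open>auto simp: bij_betw_def\<close>)
      then show "kV v = (Node \<circ> inv_into (nodes M1) s) v" using kn v by simp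
    qed
    show "\<forall>W\<in>wraps M2. kW W = inv_into (wraps M1) hW W"
    proof
      fix W assume W: "W \<in> wraps M2"
      show "kW W = inv_into (wraps M1) hW W"
        by (rule sym, rule inv_into_f_eq) (use bw kw W in \<open>auto simp: bij_betw_def\<close>)
    qed
  qed
  show ?thesis unfolding is_iso_def using H1 H2 bs bw by blast
qed

theorem mainTheorem3:
  fixes arity :: "'r \<Rightarrow> nat"
    and M1 :: "('t, 'a, 'r, 'b, 'x, 'w, 'v1) model"
    and M2 :: "('t, 'a, 'r, 'b, 'x, 'w, 'v2) model"
    and M3 :: "('t, 'a, 'r, 'b, 'x, 'w, 'v3) model"
  assumes "finite (UNIV :: 't set)" and "finite (UNIV :: 'a set)"
    and "\<forall>r. arity r > 1"
    and "is_model arity M1" and "is_model arity M2" and "is_model arity M3"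
  shows "subsumes M1 M1
       \<and> (subsumes M1 M2 \<and> subsumes M2 M3 \<longrightarrow> subsumes M1 M3)
       \<and> (subsumes M1 M2 \<and> subsumes M2 M1 \<longrightarrow> is_iso M1 M2)
       \<and> (is_iso M1 M2 \<longrightarrow> subsumes M1 M2 \<and> subsumes M2 M1)"
proof (intro conjI impI)
  show "subsumes M1 M1" unfolding subsumes_def using hom_refl[OF assms(4)] by blast
next
  assume "subsumes M1 M2 \<and> subsumes M2 M3"
  then show "subsumes M1 M3" unfolding subsumes_def using hom_comp by blast
next
  assume "subsumes M1 M2 \<and> subsumes M2 M1"
  then show "is_iso M1 M2" unfolding subsumes_def using antisym_iso[OF assms(4,5)] by blast
next
  assume "is_iso M1 M2" then show "subsumes M1 M2" unfolding is_iso_def subsumes_def by blast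
next
  assume "is_iso M1 M2" then show "subsumes M2 M1" unfolding is_iso_def subsumes_def by blast
qed

end
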